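(* Let $P\subseteq\mathbb{C}$ be a finitely generated field extension of $\mathbb{Q}$ and $a_1,\dots,a_{r+1}\in\mathbb{C}^\times$. If $\{a_1,\dots,a_r,a_{r+1}\}$ is simple in $P_{r+1}=P(a_1,\dots,a_{r+1})$, then $\{a_1,\dots,a_r\}$ is simple in $P_r=P(a_1,\dots,a_r)$.
   Context: For a field $K$, a tuple $\{c_1,\dots,c_k\}\subseteq K^{\times}$ is simple in $K$ if it is multiplicatively independent ($c_1^{n_1}\cdots c_k^{n_k}=1$ with $n_i\in\mathbb{Z}$ only if all $n_i=0$) and the multiplicative subgroup $\langle c_1,\dots,c_k\rangle$ it generates is pure in $K^{\times}$ (whenever $x^n=c$, $c\in\langle c_1,\dots,c_k\rangle$, $n\ge1$, has a solution in $K^\times$, it has one in $\langle c_1,\dots,c_k\rangle$). *)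

theory Defs
  imports Complex_Main
begin

definition is_subfield :: "complex set \<Rightarrow> bool" where
  "is_subfield K \<longleftrightarrow> 0 \<in> K \<and> 1 \<in> K \<and>
     (\<forall>x\<in>K. \<forall>y\<in>K. x + y \<in> K \<and> x * y \<in> K) \<and>
     (\<forall>x\<in>K. - x \<in> K) \<and> (\<forall>x\<in>K. x \<noteq> 0 \<longrightarrow> inverse x \<in> K)"

definition field_gen :: "complex set \<Rightarrow> complex set" where
  "field_gen S = \<Inter> {K. is_subfield K \<and> S \<subseteq> K}"

definition fin_gen_over_Q :: "complex set \<Rightarrow> bool" where
  "fin_gen_over_Q P \<longleftrightarrow> (\<exists>F. finite F \<and> P = field_gen F)"

definition mult_indep :: "complex list \<Rightarrow> bool" where
  "mult_indep cs \<longleftrightarrow> (\<forall>n :: nat \<Rightarrow> int.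
     (\<Prod>i<length cs. (cs ! i) powi (n i)) = 1 \<longrightarrow> (\<forall>i<length cs. n i = 0))"

definition mult_span :: "complex list \<Rightarrow> complex set" where
  "mult_span cs = {(\<Prod>i<length cs. (cs ! i) powi (n i)) | n :: nat \<Rightarrow> int. True}"

definition pure_in :: "complex set \<Rightarrow> complex set \<Rightarrow> bool" where
  "pure_in K G \<longleftrightarrow> (\<forall>c\<in>G. \<forall>n::nat. n \<ge> 1 \<longrightarrow>
     (\<exists>x\<in>K - {0}. x ^ n = c) \<longrightarrow> (\<exists>y\<in>G. y ^ n = c))"

definition simple_in :: "complex set \<Rightarrow> complex list \<Rightarrow> bool" where
  "simple_in K cs \<longleftrightarrow> set cs \<subseteq> K - {0} \<and> mult_indep cs \<and> pure_in K (mult_span cs)"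

end

theory Submission
  imports Defs
begin

definition EE :: "complex list \<Rightarrow> (nat \<Rightarrow> int) \<Rightarrow> complex" where
  "EE cs n = (\<Prod>i<length cs. (cs ! i) powi (n i))"

lemma EE_mult:
  assumes "set cs \<subseteq> - {0}"
  shows "EE cs n * EE cs m = EE cs (\<lambda>i. n i + m i)"
proof -
  have "\<And>i. i < length cs \<Longrightarrow> cs ! i \<noteq> 0" using assms nth_mem by fastforce
  then show ?thesis unfolding EE_def prod.distrib[symmetric]
    by (intro prod.cong) (auto simp: power_int_add)
qed

lemma EE_pow:
  shows "EE cs n ^ k = EE cs (\<lambda>i. int k * n i)"
  unfolding EE_def prod_power_distrib
  by (intro prod.cong) (auto simp: power_int_mult mult.commute power_int_power')

lemma EE_inv:
  assumes "set cs \<subseteq> - {0}"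
  shows "EE cs n * EE cs (\<lambda>i. - n i) = 1"
  using EE_mult[OF assms, of n "\<lambda>i. - n i"] by (simp add: EE_def)

lemma EE_snoc:
  "EE (cs @ [b]) n = EE cs n * b powi n (length cs)"
  unfolding EE_def by (simp add: nth_append)

lemma EE_cong:
  "(\<And>i. i < length cs \<Longrightarrow> n i = m i) \<Longrightarrow> EE cs n = EE cs m"
  unfolding EE_def by (intro prod.cong) auto

lemma field_gen_mono: "S \<subseteq> T \<Longrightarrow> field_gen S \<subseteq> field_gen T"
  unfolding field_gen_def by auto

lemma field_gen_sub: "S \<subseteq> field_gen S"
  unfolding field_gen_def by auto

theorem lemma2p5:
  fixes P :: "complex set" and as :: "complex list" and b :: complex
  assumes "fin_gen_over_Q P"
    and "is_subfield P"
    and "set (as @ [b]) \<subseteq> - {0}"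
    and "simple_in (field_gen (P \<union> set (as @ [b]))) (as @ [b])"
  shows "simple_in (field_gen (P \<union> set as)) as"
proof -
  let ?L = "as @ [b]"
  let ?K = "field_gen (P \<union> set as)"
  let ?M = "field_gen (P \<union> set ?L)"
  have nz: "set ?L \<subseteq> - {0}" using assms(3) .
  have nzas: "set as \<subseteq> - {0}" using nz by auto
  have KM: "?K \<subseteq> ?M" by (rule field_gen_mono) auto
  have ind: "mult_indep ?L" and pure: "pure_in ?M (mult_span ?L)"
    using assms(4) unfolding simple_in_def by auto
  have indE: "\<And>n. EE ?L n = 1 \<Longrightarrow> n (length as) = 0"
    using ind unfolding mult_indep_def EE_def by auto
  have ext: "\<And>k. EE as k = EE ?L (\<lambda>i. if i < length as then k i else 0)"
    by (simp add: EE_snoc cong: EE_cong)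
  have s1: "set as \<subseteq> ?K - {0}" using field_gen_sub[of "P \<union> set as"] nzas by auto
  have s2: "mult_indep as"
    unfolding mult_indep_def
  proof (rule allI, rule impI)
    fix n assume h: "(\<Prod>i<length as. as ! i powi n i) = 1"
    let ?n = "\<lambda>i. if i < length as then n i else 0"
    have "EE ?L ?n = 1" using h ext[of n] by (simp add: EE_def)
    then have "\<forall>i<length ?L. ?n i = 0" using ind unfolding mult_indep_def EE_def by (elim allE[of _ ?n]) simp
    then show "\<forall>i<length as. n i = 0" by (simp, metis less_SucI)
  qed
  have s3: "pure_in ?K (mult_span as)"
    unfolding pure_in_def
  proof (intro ballI allI impI)
    fix c and n :: nat
    assume c: "c \<in> mult_span as" and n1: "n \<ge> 1" and ex: "\<exists>x\<in>?K - {0}. x ^ n = c"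
    obtain k where ck: "c = EE as k" using c unfolding mult_span_def EE_def by auto
    let ?k = "\<lambda>i. if i < length as then k i else 0"
    have cL': "c = EE ?L ?k" using ext[of k] ck by simp
    have cL: "c \<in> mult_span ?L" unfolding mult_span_def
      by (rule CollectI, rule exI[of _ ?k]) (simp add: cL' EE_def del: length_append_singleton)
    have "\<exists>x\<in>?M - {0}. x ^ n = c" using ex KM by blast
    then obtain y where y: "y \<in> mult_span ?L" "y ^ n = c"
      using pure cL n1 unfolding pure_in_def by blast
    obtain m where ym: "y = EE ?L m" using y(1) unfolding mult_span_def EE_def by auto
    have "EE ?L (\<lambda>i. int n * m i) = EE ?L ?k" using y(2) ym ck ext[of k] EE_pow by simp
    then have "EE ?L (\<lambda>i. int n * m i) * EE ?L (\<lambda>i. - ?k i) = 1"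
      using EE_inv[OF nz, of ?k] by simp
    then have "EE ?L (\<lambda>i. int n * m i + - ?k i) = 1" using EE_mult[OF nz] by simp
    then have "int n * m (length as) = 0" using indE by fastforce
    then have m0: "m (length as) = 0" using n1 by simp
    have "y = EE as m" using ym m0 by (simp add: EE_snoc)
    then have "y \<in> mult_span as" unfolding mult_span_def EE_def by auto
    then show "\<exists>y\<in>mult_span as. y ^ n = c" using y(2) by blast
  qed
  show ?thesis unfolding simple_in_def using s1 s2 s3 by auto
qed

end
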